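(* Let $A$ be the adjacency matrix (entries in $\{0,1\}$, $A_{ij}=1$ iff there is an edge from $j$ to $i$) of a directed graph with $N$ vertices and $M\ge 1$ edges. Let $k_{\max}$ be the maximum among all in-degrees $k_i^{\mathrm{in}}=\sum_j A_{ij}$ and out-degrees $k_j^{\mathrm{out}}=\sum_i A_{ij}$ of the graph. Then \[\mathrm{srank}(A)\le \frac{M}{k_{\max}}.\]
   Context: The stable rank of a nonzero matrix $A$ is $\mathrm{srank}(A)=\|A\|_F^2/\|A\|_2^2=\sum_i\sigma_i^2/\sigma_1^2$, where $\sigma_1\ge\sigma_2\ge\cdots$ are the singular values of $A$, $\|\cdot\|_F$ is the Frobenius norm and $\|\cdot\|_2$ the spectral norm. *)

theory Defs
  imports "HOL-Analysis.Analysis"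
begin

definition frobenius_norm :: "real^'n^'m \<Rightarrow> real" where
  "frobenius_norm A = sqrt (\<Sum>i\<in>UNIV. \<Sum>j\<in>UNIV. (A $ i $ j)^2)"

definition spectral_norm :: "real^'n^'m \<Rightarrow> real" where
  "spectral_norm A = onorm (\<lambda>x. A *v x)"

definition srank :: "real^'n^'m \<Rightarrow> real" where
  "srank A = (frobenius_norm A)^2 / (spectral_norm A)^2"

(* adjacency convention: A $ i $ j = 1 iff edge from j to i *)
definition in_degree :: "real^'n^'n \<Rightarrow> 'n \<Rightarrow> real" where
  "in_degree A i = (\<Sum>j\<in>UNIV. A $ i $ j)"

definition out_degree :: "real^'n^'n \<Rightarrow> 'n \<Rightarrow> real" where
  "out_degree A j = (\<Sum>i\<in>UNIV. A $ i $ j)"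

definition num_edges :: "real^'n^'n \<Rightarrow> real" where
  "num_edges A = (\<Sum>i\<in>UNIV. \<Sum>j\<in>UNIV. A $ i $ j)"

definition max_degree :: "real^'n^'n \<Rightarrow> real" where
  "max_degree A = Max (range (in_degree A) \<union> range (out_degree A))"

end

theory Submission
  imports Defs
begin

lemma spec_bound:
  fixes A :: "real^'n^'m"
  shows "norm (A *v x) \<le> spectral_norm A * norm x"
proof -
  have "bounded_linear (\<lambda>x. A *v x)"
    by (simp add: linear_conv_bounded_linear matrix_vector_mul_linear)
  from onorm[OF this] show ?thesis by (simp add: spectral_norm_def)
qed

lemma norm_sq_vec: "(norm (x::real^'n))^2 = (\<Sum>i\<in>UNIV. (x$i)^2)"
  unfolding power2_norm_eq_inner inner_vec_def by (simp add: power2_eq_square)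

lemma sq01: assumes "\<forall>i j. A $ i $ j = 0 \<or> A $ i $ j = (1::real)"
  shows "(A $ i $ j)^2 = A $ i $ j"
  using assms by (metis one_power2 power_zero_numeral)

lemma deg_bound:
  fixes A :: "real^'n^'n"
  assumes a: "\<forall>i j. A $ i $ j = 0 \<or> A $ i $ j = 1"
  shows "out_degree A j \<le> (spectral_norm A)^2" "in_degree A i \<le> (spectral_norm A)^2"
proof -
  have s0: "spectral_norm A \<ge> 0"
    unfolding spectral_norm_def
    by (simp add: linear_conv_bounded_linear matrix_vector_mul_linear onorm_pos_le)
  have c: "(norm (A *v axis j 1))^2 = out_degree A j"
    unfolding norm_sq_vec out_degree_def
    by (simp add: matrix_vector_mult_def axis_def sq01[OF a] if_distrib cong: if_cong)
  have "norm (A *v axis j 1) \<le> spectral_norm A"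
    using spec_bound[of A "axis j 1"] by simp
  hence "(norm (A *v axis j 1))^2 \<le> (spectral_norm A)^2"
    by (simp add: power_mono)
  thus "out_degree A j \<le> (spectral_norm A)^2" using c by simp
  define r where "r = A $ i"
  define d where "d = in_degree A i"
  have d0: "d \<ge> 0" unfolding d_def in_degree_def
    using a by (metis order_refl sum_nonneg zero_less_one less_imp_le)
  have nr: "(norm r)^2 = d" unfolding norm_sq_vec r_def d_def in_degree_def
    by (simp add: sq01[OF a])
  have "(A *v r) $ i = d" unfolding r_def d_def in_degree_def
    by (simp add: matrix_vector_mult_def power2_eq_square[symmetric] sq01[OF a])
  hence "d \<le> norm (A *v r)"
    using component_le_norm_cart[of "A *v r" i] by simp
  also have "\<dots> \<le> spectral_norm A * norm r" by (rule spec_bound)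
  also have "norm r = sqrt d" using nr
    by (metis norm_ge_zero real_sqrt_unique)
  finally have h: "d \<le> spectral_norm A * sqrt d" .
  show "in_degree A i \<le> (spectral_norm A)^2"
  proof (cases "d = 0")
    case True thus ?thesis using d_def by simp
  next
    case False
    hence "sqrt d > 0" using d0 by simp
    moreover have "d = sqrt d * sqrt d" using d0 by simp
    ultimately have "sqrt d \<le> spectral_norm A" using h
      by (metis mult_le_cancel_right_pos mult.commute)
    hence "(sqrt d)^2 \<le> (spectral_norm A)^2" using \<open>sqrt d > 0\<close>
      by (intro power_mono) auto
    hence "d \<le> (spectral_norm A)^2" using d0 by (metis real_sqrt_pow2)
    thus ?thesis using d_def by simp
  qed
qed

theorem propositionS16:
  fixes A :: "real^'n^'n"
  assumes "\<forall>i j. A $ i $ j = 0 \<or> A $ i $ j = 1"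
    and "num_edges A \<ge> 1"
  shows "srank A \<le> num_edges A / max_degree A"
proof -
  note a = assms(1)
  have nn: "\<And>i j. A $ i $ j \<ge> 0" using a by (metis order_refl zero_le_one)
  have F: "(frobenius_norm A)^2 = num_edges A"
    unfolding frobenius_norm_def num_edges_def
    using nn by (simp add: sq01[OF a] sum_nonneg)
  have fin: "finite (range (in_degree A) \<union> range (out_degree A))" by simp
  have ne: "range (in_degree A) \<union> range (out_degree A) \<noteq> {}" by simp
  have le: "max_degree A \<le> (spectral_norm A)^2"
    unfolding max_degree_def using deg_bound[OF a]
    by (subst Max_le_iff[OF fin ne]) auto
  obtain i j where ij: "A $ i $ j \<noteq> 0"
    using assms(2) unfolding num_edges_def
    by (metis (no_types, lifting) not_one_le_zero sum.neutral)
  have "A $ i $ j \<le> in_degree A i" unfolding in_degree_def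
    using a by (intro member_le_sum) (auto, metis order_refl zero_le_one)
  hence "1 \<le> in_degree A i" using ij a by metis
  moreover have "in_degree A i \<le> max_degree A" unfolding max_degree_def
    using fin by (intro Max_ge) auto
  ultimately have mpos: "max_degree A > 0" by simp
  have sp: "(spectral_norm A)^2 > 0" using le mpos by linarith
  show ?thesis unfolding srank_def F
    using le mpos assms(2) mult_pos_pos[OF sp mpos] by (intro divide_left_mono) auto
qed

end
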